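(* Suppose that the set $\mathbb{X}_f\subseteq\mathbb{X}$ satisfies the terminal set assumption below, that $\overline{\Delta}\ge M$, and that there exist matrices $X=X^\top\succ 0$ in $\mathbb{R}^{n\times n}$ and $Y\in\mathbb{R}^{m\times n}$ such that for all $p\in\{1,\dots,P+1\}$ $$\begin{bmatrix} X & 0 & 0 & A_{pM}X+B_{pM}Y \\ 0 & \tilde Q_{pM} & \tilde S_{pM} & X \\ 0 & \tilde S_{pM}^\top & \tilde R_{pM} & Y \\ (A_{pM}X+B_{pM}Y)^\top & X & Y^\top & X\end{bmatrix}\succeq 0 .$$ Set $P_f:=X^{-1}$ and $K_f:=YX^{-1}$. Then: (i) $\kappa_f(\Xi_f)\subseteq \Pi$; (ii) $f^{\kappa_f}_p(\Xi_f)\subseteq \Xi_f$ for all $p\in\{1,\dots,P+1\}$; (iii) for all $\xi=(x,w,\beta)\in\Xi_f$ and all $j\in\{1,\dots,M-1\}$, $f(\xi,(K_fx,j),1)\in\Xi$; and for all $\xi\in\Xi_f$, all $p\in\{1,\dots,P\}$, all $j\in\{1,\dots,M-1\}$ and any $v$, $f(f^{\kappa_f}_p(\xi),(v,j),0)\in\Xi$; (iv) for all $p\in\{1,\dots,P+1\}$ and all $\xi\in\Xi_f$, $$V_f(f^{\kappa_f}_p(\xi))-V_f(\xi)\le -\lambda(\xi,\kappa_f(\xi),1)-\sum_{i=1}^{p-1}\lambda\big(f^{\kappa_f}_i(\xi),\kappa_f(\xi),0\big).$$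
   Context: Plant: $x(t+1)=Ax(t)+Bu(t)$, $A\in\mathbb{R}^{n\times n}$, $B\in\mathbb{R}^{n\times m}$, with state constraint set $\mathbb{X}\subseteq\mathbb{R}^n$ and input constraint set $\mathbb{U}\subseteq\mathbb{R}^m$, both closed and containing the origin; cost matrices $Q\succ0$, $R\succ 0$. Token bucket parameters: integers $g\ge1$, $c\ge g$, $b\ge c$; $M:=\lceil c/g\rceil$. $P\in\mathbb{N}_0$ is the maximal number of consecutive packet losses; $\overline{\Delta}\in\mathbb{N}$ is the maximal sampling interval. Overall state $\xi=(x,w,\beta)\in\mathbb{R}^n\times\mathbb{R}^m\times\mathbb{Z}$, overall input $\pi=(v,\Delta)\in\mathbb{R}^m\times\mathbb{N}$, packet-loss variable $\sigma\in\{0,1\}$. Constraint sets: $\Xi:=\mathbb{X}\times\mathbb{U}\times\{0,1,\dots,b\}$, $\Pi:=\mathbb{U}\times\{1,\dots,\overline{\Delta}\}$. For $j\in\mathbb{N}_0$: $A_j:=A^j$, $B_j:=\sum_{i=0}^{j-1}A^iB$ (so $B_0=0$). Transition map: $f(\xi,(v,j),\sigma):=\big(A_jx+(1-\sigma)B_jw+\sigma B_jv,\ (1-\sigma)w+\sigma v,\ \min\{\beta+jg-c,b\}\big)$. Stage cost $\ell(\xi,\pi,\sigma):=x^\top Qx+(1-\sigma)w^\top Rw+\sigma v^\top Rv$, and interval cost $\lambda(\xi,\pi,\sigma):=\ell(\xi,\pi,\sigma)+\sum_{j=1}^{\Delta-1}\ell(f(\xi,(v,j),\sigma),\pi,\sigma)$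 for $\pi=(v,\Delta)$. For $i\in\mathbb{N}$: $Q_i:=\sum_{j=0}^{i-1}A_j^\top QA_j$, $S_i:=\sum_{j=1}^{i-1}A_j^\top QB_j$, $R_i:=iR+\sum_{j=1}^{i-1}B_j^\top QB_j$, and $\begin{bmatrix}\tilde Q_i&\tilde S_i\\ \tilde S_i^\top&\tilde R_i\end{bmatrix}:=\begin{bmatrix}Q_i&S_i\\ S_i^\top&R_i\end{bmatrix}^{-1}$. Terminal ingredients: for a gain $K_f\in\mathbb{R}^{m\times n}$, $\kappa_f(\xi):=(K_fx,M)$; $\Xi_f:=\mathbb{X}_f\times\mathbb{U}\times\{c-g,\dots,b\}$; $V_f(\xi):=x^\top P_fx$ with $P_f\succ0$. Iterates: $f^{\kappa_f}_1(\xi):=f(\xi,\kappa_f(\xi),1)$ and $f^{\kappa_f}_p(\xi):=f(f^{\kappa_f}_{p-1}(\xi),(v,M),0)$ for $p\in\{2,\dots,P+1\}$ (the value of $v$ is irrelevant since $\sigma=0$). Terminal set assumption: $\mathbb{X}_f\subseteq\mathbb{X}$ is closed, contains the origin, $K_f\mathbb{X}_f\subseteq\mathbb{U}$, $(A_{pM}+B_{pM}K_f)\mathbb{X}_f\subseteq\mathbb{X}_f$ for all $p\in\{1,\dots,P+1\}$, and $(A_{pM+j}+B_{pM+j}K_f)\mathbb{X}_f\subseteq\mathbb{X}$ for all $j\in\{1,\dots,M-1\}$ and all $p\in\{0,\dots,P\}$ (here $K_f=YX^{-1}$). *)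

theory Defs
  imports "HOL-Analysis.Analysis"
begin

section \<open>Matrix helpers (matrices are real^'c^'r, i.e. r rows, c columns)\<close>

text \<open>Matrix power (note: the operator ^ on vec is componentwise, so we define it).\<close>
fun mpow :: "real^'n^'n \<Rightarrow> nat \<Rightarrow> real^'n^'n" where
  "mpow A 0 = mat 1"
| "mpow A (Suc k) = A ** mpow A k"

definition pos_def :: "real^'n^'n \<Rightarrow> bool" where
  "pos_def M \<longleftrightarrow> transpose M = M \<and> (\<forall>x. x \<noteq> 0 \<longrightarrow> x \<bullet> (M *v x) > 0)"

definition pos_semidef :: "real^'n^'n \<Rightarrow> bool" where
  "pos_semidef M \<longleftrightarrow> transpose M = M \<and> (\<forall>x. x \<bullet> (M *v x) \<ge> 0)"

definition block2 ::
  "real^'c1::finite^'r1 \<Rightarrow> real^'c2::finite^'r1 \<Rightarrow> real^'c1::finite^'r2 \<Rightarrow> real^'c2::finite^'r2 \<Rightarrow> real^('c1::finite+'c2::finite)^('r1::finite+'r2::finite)" where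
  "block2 M11 M12 M21 M22 = (\<chi> i j. case i of
      Inl i1 \<Rightarrow> (case j of Inl j1 \<Rightarrow> M11 $ i1 $ j1 | Inr j2 \<Rightarrow> M12 $ i1 $ j2)
    | Inr i2 \<Rightarrow> (case j of Inl j1 \<Rightarrow> M21 $ i2 $ j1 | Inr j2 \<Rightarrow> M22 $ i2 $ j2))"

definition blk11 :: "real^('c1::finite+'c2::finite)^('r1::finite+'r2::finite) \<Rightarrow> real^'c1::finite^'r1" where
  "blk11 M = (\<chi> i j. M $ Inl i $ Inl j)"
definition blk12 :: "real^('c1::finite+'c2::finite)^('r1::finite+'r2::finite) \<Rightarrow> real^'c2::finite^'r1" where
  "blk12 M = (\<chi> i j. M $ Inl i $ Inr j)"
definition blk21 :: "real^('c1::finite+'c2::finite)^('r1::finite+'r2::finite) \<Rightarrow> real^'c1::finite^'r2" where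
  "blk21 M = (\<chi> i j. M $ Inr i $ Inl j)"
definition blk22 :: "real^('c1::finite+'c2::finite)^('r1::finite+'r2::finite) \<Rightarrow> real^'c2::finite^'r2" where
  "blk22 M = (\<chi> i j. M $ Inr i $ Inr j)"

definition row4 ::
  "real^'a::finite^'r \<Rightarrow> real^'b::finite^'r \<Rightarrow> real^'c::finite^'r \<Rightarrow> real^'d::finite^'r \<Rightarrow>
   'r \<Rightarrow> 'a + ('b + ('c + 'd)) \<Rightarrow> real" where
  "row4 N1 N2 N3 N4 r j = (case j of Inl a \<Rightarrow> N1 $ r $ a
     | Inr (Inl b) \<Rightarrow> N2 $ r $ b | Inr (Inr (Inl c)) \<Rightarrow> N3 $ r $ c
     | Inr (Inr (Inr d)) \<Rightarrow> N4 $ r $ d)"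

definition block4 ::
  "real^'a::finite^'a \<Rightarrow> real^'b::finite^'a \<Rightarrow> real^'c::finite^'a \<Rightarrow> real^'d::finite^'a \<Rightarrow>
   real^'a^'b \<Rightarrow> real^'b^'b \<Rightarrow> real^'c^'b \<Rightarrow> real^'d^'b \<Rightarrow>
   real^'a^'c \<Rightarrow> real^'b^'c \<Rightarrow> real^'c^'c \<Rightarrow> real^'d^'c \<Rightarrow>
   real^'a^'d \<Rightarrow> real^'b^'d \<Rightarrow> real^'c^'d \<Rightarrow> real^'d^'d \<Rightarrow>
   real^('a+('b+('c+'d)))^('a+('b+('c+'d)))" where
  "block4 M11 M12 M13 M14 M21 M22 M23 M24 M31 M32 M33 M34 M41 M42 M43 M44 =
     (\<chi> i j. case i of Inl a \<Rightarrow> row4 M11 M12 M13 M14 a j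
       | Inr (Inl b) \<Rightarrow> row4 M21 M22 M23 M24 b j
       | Inr (Inr (Inl c)) \<Rightarrow> row4 M31 M32 M33 M34 c j
       | Inr (Inr (Inr d)) \<Rightarrow> row4 M41 M42 M43 M44 d j)"

definition Aj :: "real^'n^'n \<Rightarrow> nat \<Rightarrow> real^'n^'n" where
  "Aj A j = mpow A j"

definition Bj :: "real^'n^'n \<Rightarrow> real^'m^'n \<Rightarrow> nat \<Rightarrow> real^'m^'n" where
  "Bj A B j = (\<Sum>i<j. mpow A i ** B)"

text \<open>Overall state xi = (x, w, beta), overall input pin = (v, Delta), packet-loss variable sigma in {0,1}.\<close>
type_synonym ('n,'m) ostate = "(real^'n) \<times> (real^'m) \<times> int"
type_synonym 'm oinput = "(real^'m) \<times> nat"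

definition trans_f ::
  "real^'n^'n \<Rightarrow> real^'m^'n \<Rightarrow> int \<Rightarrow> int \<Rightarrow> int \<Rightarrow>
   ('n,'m) ostate \<Rightarrow> 'm oinput \<Rightarrow> nat \<Rightarrow> ('n,'m) ostate" where
  "trans_f A B g c b xi pin \<sigma> =
     (case xi of (x, w, \<beta>) \<Rightarrow> case pin of (v, j) \<Rightarrow>
       (Aj A j *v x + (1 - real \<sigma>) *\<^sub>R (Bj A B j *v w) + real \<sigma> *\<^sub>R (Bj A B j *v v),
        (1 - real \<sigma>) *\<^sub>R w + real \<sigma> *\<^sub>R v,
        min (\<beta> + int j * g - c) b))"

definition stage_cost ::
  "real^'n^'n \<Rightarrow> real^'m^'m \<Rightarrow> ('n,'m) ostate \<Rightarrow> 'm oinput \<Rightarrow> nat \<Rightarrow> real" where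
  "stage_cost Q R xi pin \<sigma> =
     (case xi of (x, w, \<beta>) \<Rightarrow> case pin of (v, \<Delta>) \<Rightarrow>
       x \<bullet> (Q *v x) + (1 - real \<sigma>) * (w \<bullet> (R *v w)) + real \<sigma> * (v \<bullet> (R *v v)))"

definition interval_cost ::
  "real^'n^'n \<Rightarrow> real^'m^'n \<Rightarrow> real^'n^'n \<Rightarrow> real^'m^'m \<Rightarrow> int \<Rightarrow> int \<Rightarrow> int \<Rightarrow>
   ('n,'m) ostate \<Rightarrow> 'm oinput \<Rightarrow> nat \<Rightarrow> real" where
  "interval_cost A B Q R g c b xi pin \<sigma> =
     (case pin of (v, \<Delta>) \<Rightarrow>
       stage_cost Q R xi pin \<sigma>
       + (\<Sum>j\<in>{1..<\<Delta>}. stage_cost Q R (trans_f A B g c b xi (v, j) \<sigma>) pin \<sigma>))"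

definition Qi :: "real^'n^'n \<Rightarrow> real^'n^'n \<Rightarrow> nat \<Rightarrow> real^'n^'n" where
  "Qi A Q i = (\<Sum>j<i. transpose (Aj A j) ** Q ** Aj A j)"

definition Si :: "real^'n^'n \<Rightarrow> real^'m^'n \<Rightarrow> real^'n^'n \<Rightarrow> nat \<Rightarrow> real^'m^'n" where
  "Si A B Q i = (\<Sum>j\<in>{1..<i}. transpose (Aj A j) ** Q ** Bj A B j)"

definition Ri :: "real^'n^'n \<Rightarrow> real^'m^'n \<Rightarrow> real^'n^'n \<Rightarrow> real^'m^'m \<Rightarrow> nat \<Rightarrow> real^'m^'m" where
  "Ri A B Q R i = real i *\<^sub>R R + (\<Sum>j\<in>{1..<i}. transpose (Bj A B j) ** Q ** Bj A B j)"

definition QSR_inv ::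
  "real^'n^'n \<Rightarrow> real^'m^'n \<Rightarrow> real^'n^'n \<Rightarrow> real^'m^'m \<Rightarrow> nat \<Rightarrow> real^('n+'m)^('n+'m)" where
  "QSR_inv A B Q R i =
     matrix_inv (block2 (Qi A Q i) (Si A B Q i) (transpose (Si A B Q i)) (Ri A B Q R i))"

definition Qt :: "real^'n^'n \<Rightarrow> real^'m^'n \<Rightarrow> real^'n^'n \<Rightarrow> real^'m^'m \<Rightarrow> nat \<Rightarrow> real^'n^'n" where
  "Qt A B Q R i = blk11 (QSR_inv A B Q R i)"
definition St :: "real^'n^'n \<Rightarrow> real^'m^'n \<Rightarrow> real^'n^'n \<Rightarrow> real^'m^'m \<Rightarrow> nat \<Rightarrow> real^'m^'n" where
  "St A B Q R i = blk12 (QSR_inv A B Q R i)"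
definition Rt :: "real^'n^'n \<Rightarrow> real^'m^'n \<Rightarrow> real^'n^'n \<Rightarrow> real^'m^'m \<Rightarrow> nat \<Rightarrow> real^'m^'m" where
  "Rt A B Q R i = blk22 (QSR_inv A B Q R i)"

definition Mtb :: "int \<Rightarrow> int \<Rightarrow> nat" where
  "Mtb g c = nat \<lceil>real_of_int c / real_of_int g\<rceil>"

definition Xi_set :: "(real^'n) set \<Rightarrow> (real^'m) set \<Rightarrow> int \<Rightarrow> ('n,'m) ostate set" where
  "Xi_set XX UU b = XX \<times> UU \<times> {0..b}"

definition Pi_set :: "(real^'m) set \<Rightarrow> nat \<Rightarrow> 'm oinput set" where
  "Pi_set UU Dbar = UU \<times> {1..Dbar}"

definition kappa_f :: "real^'n^'m \<Rightarrow> nat \<Rightarrow> ('n,'m) ostate \<Rightarrow> 'm oinput" where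
  "kappa_f Kf M xi = (case xi of (x, w, \<beta>) \<Rightarrow> (Kf *v x, M))"

definition Xi_f :: "(real^'n) set \<Rightarrow> (real^'m) set \<Rightarrow> int \<Rightarrow> int \<Rightarrow> int \<Rightarrow> ('n,'m) ostate set" where
  "Xi_f Xf UU g c b = Xf \<times> UU \<times> {c - g..b}"

definition V_f :: "real^'n^'n \<Rightarrow> ('n,'m) ostate \<Rightarrow> real" where
  "V_f Pf xi = (case xi of (x, w, \<beta>) \<Rightarrow> x \<bullet> (Pf *v x))"

text \<open>Iterates f^{kappa_f}_p for p >= 1 (the value at p = 0 is unused; set to the identity).
  For p >= 2 the input v is irrelevant since sigma = 0; we use v = 0.\<close>
fun f_kf ::
  "real^'n^'n \<Rightarrow> real^'m^'n \<Rightarrow> int \<Rightarrow> int \<Rightarrow> int \<Rightarrow> real^'n^'m \<Rightarrow> nat \<Rightarrow>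
   ('n,'m) ostate \<Rightarrow> ('n,'m) ostate" where
  "f_kf A B g c b Kf 0 xi = xi"
| "f_kf A B g c b Kf (Suc 0) xi = trans_f A B g c b xi (kappa_f Kf (Mtb g c) xi) 1"
| "f_kf A B g c b Kf (Suc (Suc p)) xi =
     trans_f A B g c b (f_kf A B g c b Kf (Suc p) xi) (0, Mtb g c) 0"

end

theory Submission
  imports Defs
begin

lemma sum_UNIV_Plus: "sum f (UNIV::('a::finite + 'b::finite) set) = sum (f \<circ> Inl) UNIV + sum (f \<circ> Inr) UNIV"
  by (metis UNIV_Plus_UNIV sum.Plus finite)

definition join2 :: "real^'a::finite \<Rightarrow> real^'b::finite \<Rightarrow> real^('a+'b)" where
  "join2 a b = (\<chi> i. case i of Inl x \<Rightarrow> a$x | Inr y \<Rightarrow> b$y)"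

definition join4 :: "real^'a::finite \<Rightarrow> real^'b::finite \<Rightarrow> real^'c::finite \<Rightarrow> real^'d::finite \<Rightarrow> real^('a+('b+('c+'d)))" where
  "join4 a b c d = join2 a (join2 b (join2 c d))"

lemma join2_nth[simp]: "join2 a b $ Inl x = a $ x" "join2 a b $ Inr y = b $ y"
  by (simp_all add: join2_def)

lemma inner_join2: "join2 a b \<bullet> join2 a' b' = a \<bullet> a' + b \<bullet> b'"
  by (simp add: inner_vec_def sum_UNIV_Plus o_def)

lemma inner_join4: "join4 a b c d \<bullet> join4 a' b' c' d' = a \<bullet> a' + b \<bullet> b' + c \<bullet> c' + d \<bullet> d'"
  by (simp add: join4_def inner_join2)

lemma join2_eq: "join2 a b = join2 a' b' \<longleftrightarrow> a = a' \<and> b = b'"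
  by (auto simp: vec_eq_iff join2_def split: sum.splits)

lemma join2_surj: "w = join2 (\<chi> i. w $ Inl i) (\<chi> i. w $ Inr i)"
  by (simp add: vec_eq_iff join2_def split: sum.splits)

lemma join2_zero: "join2 0 0 = 0"
  by (simp add: vec_eq_iff join2_def split: sum.splits)

lemma join2_uminus: "- join2 a b = join2 (-a) (-b)"
  by (simp add: vec_eq_iff join2_def split: sum.splits)

lemma block2_mult: "block2 M11 M12 M21 M22 *v join2 a b = join2 (M11 *v a + M12 *v b) (M21 *v a + M22 *v b)"
  by (simp add: vec_eq_iff block2_def join2_def matrix_vector_mult_def sum_UNIV_Plus o_def split: sum.splits)

lemma blk_mult: "M *v join2 a b = join2 (blk11 M *v a + blk12 M *v b) (blk21 M *v a + blk22 M *v b)"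
  by (simp add: vec_eq_iff blk11_def blk12_def blk21_def blk22_def join2_def matrix_vector_mult_def sum_UNIV_Plus o_def split: sum.splits)

lemma block4_mult: "block4 M11 M12 M13 M14 M21 M22 M23 M24 M31 M32 M33 M34 M41 M42 M43 M44 *v join4 a b c d
  = join4 (M11 *v a + M12 *v b + M13 *v c + M14 *v d) (M21 *v a + M22 *v b + M23 *v c + M24 *v d)
          (M31 *v a + M32 *v b + M33 *v c + M34 *v d) (M41 *v a + M42 *v b + M43 *v c + M44 *v d)"
  by (simp add: vec_eq_iff block4_def row4_def join4_def join2_def matrix_vector_mult_def sum_UNIV_Plus o_def add.assoc split: sum.splits)

lemma transpose_blk12: "transpose (blk12 M) = blk21 (transpose M)"
  by (simp add: vec_eq_iff transpose_def blk12_def blk21_def)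

lemma transpose_block2: "transpose (block2 A B C D) = block2 (transpose A) (transpose C) (transpose B) (transpose D)"
  by (simp add: vec_eq_iff transpose_def block2_def split: sum.splits)

lemma inner_transpose: "x \<bullet> (transpose M *v y) = (M *v x) \<bullet> (y::real^_)"
  by (metis dot_lmul_matrix inner_commute transpose_matrix_vector vector_transpose_matrix)

lemma invertible_inv: "invertible A \<Longrightarrow> A ** matrix_inv A = mat 1 \<and> matrix_inv A ** A = mat 1"
  unfolding invertible_def matrix_inv_def by (rule someI_ex)

lemma posdef_invertible:
  fixes M :: "real^'k::finite^'k"
  assumes "\<And>x. x \<noteq> 0 \<Longrightarrow> x \<bullet> (M *v x) > 0"
  shows "invertible M"
proof -
  have "\<forall>x. M *v x = 0 \<longrightarrow> x = 0" using assms by force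
  then show ?thesis using matrix_left_invertible_ker invertible_left_inverse by blast
qed


lemma mpow_add: "mpow A (a + b) = mpow A a ** mpow A b"
  by (induct a) (simp_all add: matrix_mul_assoc)

lemma Bj_0[simp]: "Bj A B 0 = 0" by (simp add: Bj_def)
lemma Aj_0[simp]: "Aj A 0 = mat 1" by (simp add: Aj_def)

lemma Bj_add: "Bj A B (k + j) = Bj A B j + mpow A j ** Bj A B k"
proof (induct k)
  case 0 then show ?case by simp
next
  case (Suc k)
  have "Bj A B (Suc k + j) = Bj A B (k + j) + mpow A (k + j) ** B"
    by (simp add: Bj_def)
  also have "\<dots> = Bj A B j + mpow A j ** (Bj A B k + mpow A k ** B)"
    using Suc by (simp add: matrix_add_ldistrib matrix_mul_assoc mpow_add add.commute[of k j] add.assoc)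
  also have "Bj A B k + mpow A k ** B = Bj A B (Suc k)" by (simp add: Bj_def)
  finally show ?case .
qed

lemma compose_AB: "Aj A j *v (Aj A k *v x + Bj A B k *v u) + Bj A B j *v u
   = Aj A (k + j) *v x + Bj A B (k + j) *v u"
proof -
  have e1: "Aj A (k + j) = mpow A j ** mpow A k" by (simp add: Aj_def mpow_add[symmetric] add.commute)
  have e2: "Bj A B (k+j) = Bj A B j + mpow A j ** Bj A B k" by (rule Bj_add)
  show ?thesis unfolding e1 e2
    by (simp add: Aj_def matrix_vector_right_distrib
      matrix_vector_mul_assoc matrix_vector_mult_add_rdistrib algebra_simps)
qed

lemma trans_f_1: "trans_f A B g c b (x, w, \<beta>) (v, j) 1 = (Aj A j *v x + Bj A B j *v v, v, min (\<beta> + int j * g - c) b)"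
  by (simp add: trans_f_def)

lemma trans_f_1': "trans_f A B g c b (x, w, \<beta>) (v, j) (Suc 0) = (Aj A j *v x + Bj A B j *v v, v, min (\<beta> + int j * g - c) b)"
  by (simp add: trans_f_def)

lemma trans_f_0: "trans_f A B g c b (x, w, \<beta>) (v, j) 0 = (Aj A j *v x + Bj A B j *v w, w, min (\<beta> + int j * g - c) b)"
  by (simp add: trans_f_def)

lemma Mtb_ge: assumes "g \<ge> 1" "c \<ge> g" shows "int (Mtb g c) * g \<ge> c" "Mtb g c \<ge> 1"
proof -
  have "real_of_int c / real_of_int g \<le> real_of_int \<lceil>real_of_int c / real_of_int g\<rceil>" by linarith
  moreover have "real_of_int c / real_of_int g \<ge> 1" using assms by simp
  ultimately have c1: "\<lceil>real_of_int c / real_of_int g\<rceil> \<ge> 1" by linarith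
  have "real_of_int c \<le> real_of_int \<lceil>real_of_int c / real_of_int g\<rceil> * real_of_int g"
  proof -
    have "real_of_int c = (real_of_int c / real_of_int g) * real_of_int g" using assms by simp
    also have "\<dots> \<le> real_of_int \<lceil>real_of_int c / real_of_int g\<rceil> * real_of_int g"
      by (rule mult_right_mono) (use assms in auto)
    finally show ?thesis .
  qed
  then have "c \<le> \<lceil>real_of_int c / real_of_int g\<rceil> * g" by (metis of_int_le_iff of_int_mult)
  then show "int (Mtb g c) * g \<ge> c" using c1 by (simp add: Mtb_def)
  show "Mtb g c \<ge> 1" unfolding Mtb_def using c1 by (subst le_nat_iff) auto
qed

lemma fk_form:
  assumes "g \<ge> 1" "c \<ge> g" "b \<ge> c"
  shows "\<exists>\<beta>'. f_kf A B g c b K (Suc p) (x, w, \<beta>) =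
     (Aj A (Suc p * Mtb g c) *v x + Bj A B (Suc p * Mtb g c) *v (K *v x), K *v x, \<beta>')
     \<and> (c - g \<le> \<beta> \<longrightarrow> \<beta> \<le> b \<longrightarrow> c - g \<le> \<beta>' \<and> \<beta>' \<le> b)"
proof (induct p)
  case 0
  have "int (Mtb g c) * g \<ge> c" using Mtb_ge assms by blast
  then show ?case using assms by (simp add: kappa_f_def trans_f_1')
next
  case (Suc p)
  then obtain \<beta>' where e: "f_kf A B g c b K (Suc p) (x, w, \<beta>) =
     (Aj A (Suc p * Mtb g c) *v x + Bj A B (Suc p * Mtb g c) *v (K *v x), K *v x, \<beta>')"
    and bb: "(c - g \<le> \<beta> \<longrightarrow> \<beta> \<le> b \<longrightarrow> c - g \<le> \<beta>' \<and> \<beta>' \<le> b)" by blast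
  have M: "int (Mtb g c) * g \<ge> c" using Mtb_ge assms by blast
  have "f_kf A B g c b K (Suc (Suc p)) (x, w, \<beta>) = 
     (Aj A (Suc (Suc p) * Mtb g c) *v x + Bj A B (Suc (Suc p) * Mtb g c) *v (K *v x), K *v x, min (\<beta>' + int (Mtb g c) * g - c) b)"
    using compose_AB[of A "Mtb g c" "Suc p * Mtb g c" x B "K *v x"]
    by (simp add: e trans_f_0 add.commute)
  then show ?case using bb M assms by auto
qed


definition qf :: "real^'n^'n \<Rightarrow> real^'m^'n \<Rightarrow> real^'n^'n \<Rightarrow> real^'m^'m \<Rightarrow> real^'n \<Rightarrow> real^'m \<Rightarrow> nat \<Rightarrow> real" where
  "qf A B Q R x u j = (Aj A j *v x + Bj A B j *v u) \<bullet> (Q *v (Aj A j *v x + Bj A B j *v u)) + u \<bullet> (R *v u)"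

lemma sum_split0: "M \<ge> 1 \<Longrightarrow> sum f {..<M} = f 0 + sum f {1..<(M::nat)}"
proof -
  assume "M \<ge> 1"
  then have "{..<M} = insert 0 {1..<M}" by auto
  then show ?thesis by simp
qed

lemma ic1: "M \<ge> 1 \<Longrightarrow> interval_cost A B Q R g c b (x,w,\<beta>) (u,M) 1 = (\<Sum>j<M. qf A B Q R x u j)"
  by (simp add: sum_split0 interval_cost_def stage_cost_def trans_f_1 trans_f_1' qf_def)

lemma ic0: "M \<ge> 1 \<Longrightarrow> interval_cost A B Q R g c b (Aj A k *v x + Bj A B k *v u, u, \<beta>) (u,M) 0
   = (\<Sum>j<M. qf A B Q R x u (k + j))"
  by (simp add: sum_split0 interval_cost_def stage_cost_def trans_f_0 qf_def compose_AB)

lemma sum_mvm: "(sum M S) *v x = sum (\<lambda>j. M j *v x) S"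
  by (induct S rule: infinite_finite_induct) (simp_all add: matrix_vector_mult_add_rdistrib)

lemma transpose_add: "transpose (A + B) = transpose A + transpose (B::real^'a^'b)"
  by (simp add: transpose_def vec_eq_iff)

lemma transpose_zero: "transpose (0::real^'a^'b) = 0"
  by (simp add: transpose_def vec_eq_iff)

lemma transpose_sum: "transpose (sum M S) = sum (\<lambda>j. transpose (M j :: real^'a^'b)) S"
  by (induct S rule: infinite_finite_induct) (simp_all add: transpose_add transpose_zero)

lemma sym_inner: "transpose Q = Q \<Longrightarrow> a \<bullet> (Q *v b) = b \<bullet> (Q *v (a::real^_))"
  by (metis inner_transpose inner_commute)

lemma Si_alt: "Si A B Q i = (\<Sum>j<i. transpose (Aj A j) ** Q ** Bj A B j)"
  by (cases "i = 0") (simp_all add: Si_def sum_split0)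

lemma Ri_alt: "Ri A B Q R i = real i *\<^sub>R R + (\<Sum>j<i. transpose (Bj A B j) ** Q ** Bj A B j)"
  by (cases "i = 0") (simp_all add: Ri_def sum_split0)

lemma quadH:
  assumes Qs: "transpose Q = Q"
  shows "join2 x u \<bullet> (block2 (Qi A Q i) (Si A B Q i) (transpose (Si A B Q i)) (Ri A B Q R i) *v join2 x u)
    = (\<Sum>j<i. qf A B Q R x u j)"
proof -
  let ?a = "\<lambda>j. Aj A j *v x" and ?b = "\<lambda>j. Bj A B j *v u"
  have 1: "x \<bullet> (Qi A Q i *v x) = (\<Sum>j<i. ?a j \<bullet> (Q *v ?a j))"
    unfolding Qi_def sum_mvm inner_sum_right
    by (simp add: matrix_vector_mul_assoc[symmetric] inner_transpose del: transpose_matrix_vector)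
  have 2: "x \<bullet> (Si A B Q i *v u) = (\<Sum>j<i. ?a j \<bullet> (Q *v ?b j))"
    unfolding Si_alt sum_mvm inner_sum_right
    by (simp add: matrix_vector_mul_assoc[symmetric] inner_transpose del: transpose_matrix_vector)
  have 3: "u \<bullet> (transpose (Si A B Q i) *v x) = (\<Sum>j<i. ?a j \<bullet> (Q *v ?b j))"
    using 2 by (simp add: inner_transpose inner_commute del: transpose_matrix_vector)
  have 4: "u \<bullet> (Ri A B Q R i *v u) = real i * (u \<bullet> (R *v u)) + (\<Sum>j<i. ?b j \<bullet> (Q *v ?b j))"
    unfolding Ri_alt matrix_vector_mult_add_rdistrib sum_mvm inner_sum_right inner_add_right
    by (simp add: matrix_vector_mul_assoc[symmetric] inner_transpose scaleR_matrix_vector_assoc[symmetric] del: transpose_matrix_vector)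
  have q: "qf A B Q R x u j = ?a j \<bullet> (Q *v ?a j) + 2 * (?a j \<bullet> (Q *v ?b j)) + ?b j \<bullet> (Q *v ?b j) + u \<bullet> (R *v u)" for j
    unfolding qf_def using sym_inner[OF Qs, of "?b j" "?a j"]
    by (simp add: matrix_vector_right_distrib inner_add_left inner_add_right)
  show ?thesis
    unfolding block2_mult inner_join2 inner_add_right 1 2 3 4 q
    by (simp add: sum.distrib sum_distrib_left)
qed

lemma posdef_nonneg: "pos_def Q \<Longrightarrow> 0 \<le> x \<bullet> (Q *v x)"
  unfolding pos_def_def by (cases "x = 0") (auto intro: less_imp_le)

lemma H_pos:
  assumes Q: "pos_def Q" and R: "pos_def R" and i: "i \<ge> 1" and w: "w \<noteq> 0"
  shows "0 < w \<bullet> (block2 (Qi A Q i) (Si A B Q i) (transpose (Si A B Q i)) (Ri A B Q R i) *v w)"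
proof -
  obtain x u where wj: "w = join2 x u" using join2_surj by blast
  have xu: "x \<noteq> 0 \<or> u \<noteq> 0" using w wj join2_zero by auto
  have Qs: "transpose Q = Q" using Q by (simp add: pos_def_def)
  have nn: "0 \<le> qf A B Q R x u j" for j
    unfolding qf_def using posdef_nonneg[OF Q] posdef_nonneg[OF R] by (simp add: add_nonneg_nonneg)
  have q0: "qf A B Q R x u 0 = x \<bullet> (Q *v x) + u \<bullet> (R *v u)" by (simp add: qf_def)
  have "0 < qf A B Q R x u 0"
    unfolding q0 using xu posdef_nonneg[OF Q, of x] posdef_nonneg[OF R, of u] Q R
    unfolding pos_def_def by (smt (verit))
  also have "\<dots> \<le> (\<Sum>j<i. qf A B Q R x u j)"
    using i nn by (intro member_le_sum) auto
  finally show ?thesis unfolding wj quadH[OF Qs] .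
qed

lemma H_sym:
  assumes Q: "transpose Q = Q" and R: "transpose R = R"
  shows "transpose (block2 (Qi A Q i) (Si A B Q i) (transpose (Si A B Q i)) (Ri A B Q R i))
      = block2 (Qi A Q i) (Si A B Q i) (transpose (Si A B Q i)) (Ri A B Q R i)"
proof -
  have "transpose (Qi A Q i) = Qi A Q i"
    unfolding Qi_def transpose_sum by (simp add: matrix_transpose_mul Q matrix_mul_assoc)
  moreover have "transpose (Ri A B Q R i) = Ri A B Q R i"
    unfolding Ri_def transpose_add transpose_sum transpose_scalar
    by (simp add: matrix_transpose_mul Q R matrix_mul_assoc)
  ultimately show ?thesis by (simp add: transpose_block2)
qed

lemma inv_sym:
  fixes H :: "real^'k^'k"
  assumes "invertible H" "transpose H = H"
  shows "transpose (matrix_inv H) = matrix_inv H"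
proof -
  let ?N = "transpose (matrix_inv H)"
  have "?N ** H = mat 1"
    by (metis assms invertible_inv matrix_transpose_mul transpose_mat)
  then have "?N = ?N ** (H ** matrix_inv H)" using invertible_inv[OF assms(1)] by simp
  also have "\<dots> = matrix_inv H" by (simp add: matrix_mul_assoc \<open>?N ** H = mat 1\<close>)
  finally show ?thesis .
qed


lemma mvm_neg: "M *v (- y) = - (M *v (y::real^_))"
  by (simp add: vec_eq_iff matrix_vector_mult_def sum_negf)

lemma key:
  fixes X :: "real^'n^'n" and Y :: "real^'n^'m" and Ai :: "real^'n^'n" and Bi :: "real^'m^'n"
    and H :: "real^('n+'m)^('n+'m)" and x :: "real^'n"
  assumes Xi: "invertible X" and Xs: "transpose X = X" and Hi: "invertible H"
    and Hs: "transpose (matrix_inv H) = matrix_inv H"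
    and PSD: "pos_semidef (block4 X 0 0 (Ai ** X + Bi ** Y)
        0 (blk11 (matrix_inv H)) (blk12 (matrix_inv H)) X
        0 (transpose (blk12 (matrix_inv H))) (blk22 (matrix_inv H)) Y
        (transpose (Ai ** X + Bi ** Y)) X (transpose Y) X)"
  shows "((Ai + Bi ** (Y ** matrix_inv X)) *v x) \<bullet> (matrix_inv X *v ((Ai + Bi ** (Y ** matrix_inv X)) *v x))
     - x \<bullet> (matrix_inv X *v x)
     \<le> - (join2 x ((Y ** matrix_inv X) *v x) \<bullet> (H *v join2 x ((Y ** matrix_inv X) *v x)))"
proof -
  define P where "P = matrix_inv X"
  define Hv where "Hv = matrix_inv H"
  define u where "u = (Y ** P) *v x"
  define xp where "xp = (Ai + Bi ** (Y ** P)) *v x"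
  define z where "z = P *v x"
  define \<Phi> where "\<Phi> = Ai ** X + Bi ** Y"
  have XP: "X ** P = mat 1" "P ** X = mat 1" using invertible_inv[OF Xi] by (simp_all add: P_def)
  have HH: "Hv ** H = mat 1" using invertible_inv[OF Hi] by (simp add: Hv_def)
  have Xz: "X *v z = x" by (simp add: z_def matrix_vector_mul_assoc XP)
  have u': "u = Y *v z" by (simp add: u_def z_def matrix_vector_mul_assoc)
  have \<Phi>z: "\<Phi> *v z = xp"
    by (simp add: \<Phi>_def xp_def matrix_vector_mult_add_rdistrib u' z_def
        matrix_vector_mul_assoc[symmetric] Xz[unfolded z_def])
  define a where "a = - (P *v xp)"
  have Xa: "X *v a = - xp" by (simp add: a_def mvm_neg matrix_vector_mul_assoc XP)
  define w where "w = join2 x u"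
  obtain h1 h2 where hw: "H *v w = join2 h1 h2" using join2_surj by blast
  define b where "b = - h1"
  define c where "c = - h2"
  have "Hv *v join2 b c = - w"
    by (simp add: b_def c_def join2_uminus[symmetric] hw[symmetric] mvm_neg matrix_vector_mul_assoc HH)
  then have bc: "blk11 Hv *v b + blk12 Hv *v c = - x" "blk21 Hv *v b + blk22 Hv *v c = - u"
    unfolding blk_mult w_def join2_uminus join2_eq by auto
  have tr: "transpose (blk12 Hv) = blk21 Hv"
    using Hs by (simp add: transpose_blk12 Hv_def)
  define v where "v = join4 a b c z"
  have "0 \<le> v \<bullet> (block4 X 0 0 \<Phi> 0 (blk11 Hv) (blk12 Hv) X 0 (transpose (blk12 Hv)) (blk22 Hv) Y
        (transpose \<Phi>) X (transpose Y) X *v v)"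
    using PSD unfolding pos_semidef_def \<Phi>_def Hv_def by blast
  also have "\<dots> = a \<bullet> (X *v a + \<Phi> *v z) + b \<bullet> ((blk11 Hv *v b + blk12 Hv *v c) + X *v z)
      + c \<bullet> ((blk21 Hv *v b + blk22 Hv *v c) + Y *v z)
      + (z \<bullet> (transpose \<Phi> *v a) + z \<bullet> (transpose X *v b) + z \<bullet> (transpose Y *v c) + z \<bullet> (X *v z))"
    unfolding v_def block4_mult inner_join4 tr[symmetric] Xs
    by (simp add: inner_add_right algebra_simps)
  also have "\<dots> = xp \<bullet> a + x \<bullet> b + u \<bullet> c + z \<bullet> x"
    unfolding bc Xa \<Phi>z Xz inner_transpose u'[symmetric] by (simp add: Xs Xz)
  also have "\<dots> = - (xp \<bullet> (P *v xp)) - w \<bullet> (H *v w) + x \<bullet> (P *v x)"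
  proof -
    have "w \<bullet> (H *v w) = x \<bullet> h1 + u \<bullet> h2" unfolding hw by (simp add: w_def inner_join2)
    then show ?thesis by (simp add: a_def b_def c_def z_def inner_commute)
  qed
  finally show ?thesis unfolding P_def[symmetric] u_def[symmetric] xp_def[symmetric] w_def[symmetric]
    by linarith
qed


lemma group_sum: "(\<Sum>i<p. \<Sum>j<M. f (i*M + j)) = (\<Sum>k<p*(M::nat). (f k :: real))"
proof (induct p)
  case 0 then show ?case by simp
next
  case (Suc p)
  have "(\<Sum>k<Suc p * M. f k) = (\<Sum>k<p*M. f k) + (\<Sum>k\<in>{p*M..<p*M+M}. f k)"
    by (simp add: add.commute sum.atLeastLessThan_concat[symmetric] lessThan_atLeast0)
  also have "(\<Sum>k\<in>{p*M..<p*M+M}. f k) = (\<Sum>j<M. f (p*M + j))"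
    unfolding sum.atLeastLessThan_shift_0[of f "p*M"] by (simp add: lessThan_atLeast0 o_def)
  finally show ?case using Suc by simp
qed

theorem lemma1:
  fixes A :: "real^'n^'n" and B :: "real^'m^'n"
    and Q :: "real^'n^'n" and R :: "real^'m^'m"
    and XX Xf :: "(real^'n) set" and UU :: "(real^'m) set"
    and g c b :: int and P Dbar :: nat
    and X :: "real^'n^'n" and Y :: "real^'n^'m"
  assumes XX: "closed XX" "0 \<in> XX"
    and UU: "closed UU" "0 \<in> UU"
    and Qpd: "pos_def Q" and Rpd: "pos_def R"
    and tb: "g \<ge> 1" "c \<ge> g" "b \<ge> c"
    and Dbar: "Dbar \<ge> 1" "Dbar \<ge> Mtb g c"
    and Xpd: "pos_def X"
    and LMI: "\<forall>p\<in>{1..P+1}. pos_semidef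
      (block4
        X 0 0 (Aj A (p * Mtb g c) ** X + Bj A B (p * Mtb g c) ** Y)
        0 (Qt A B Q R (p * Mtb g c)) (St A B Q R (p * Mtb g c)) X
        0 (transpose (St A B Q R (p * Mtb g c))) (Rt A B Q R (p * Mtb g c)) Y
        (transpose (Aj A (p * Mtb g c) ** X + Bj A B (p * Mtb g c) ** Y)) X (transpose Y) X)"
    and Xf: "Xf \<subseteq> XX" "closed Xf" "0 \<in> Xf"
      "(\<lambda>x. (Y ** matrix_inv X) *v x) ` Xf \<subseteq> UU"
      "\<forall>p\<in>{1..P+1}. (\<lambda>x. (Aj A (p * Mtb g c) + Bj A B (p * Mtb g c) ** (Y ** matrix_inv X)) *v x) ` Xf \<subseteq> Xf"
      "\<forall>p\<in>{0..P}. \<forall>j\<in>{1..Mtb g c - 1}.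
         (\<lambda>x. (Aj A (p * Mtb g c + j) + Bj A B (p * Mtb g c + j) ** (Y ** matrix_inv X)) *v x) ` Xf \<subseteq> XX"
  shows
    "(let Pf = matrix_inv X; Kf = Y ** matrix_inv X; M = Mtb g c;
          f = trans_f A B g c b; fk = f_kf A B g c b Kf;
          \<kappa> = kappa_f Kf M; lam = interval_cost A B Q R g c b;
          \<Xi>f = Xi_f Xf UU g c b; \<Xi> = Xi_set XX UU b
      in (\<forall>\<xi>\<in>\<Xi>f. \<kappa> \<xi> \<in> Pi_set UU Dbar)
       \<and> (\<forall>p\<in>{1..P+1}. \<forall>\<xi>\<in>\<Xi>f. fk p \<xi> \<in> \<Xi>f)
       \<and> (\<forall>\<xi>\<in>\<Xi>f. \<forall>j\<in>{1..M-1}. f \<xi> (Kf *v fst \<xi>, j) 1 \<in> \<Xi>)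
       \<and> (\<forall>\<xi>\<in>\<Xi>f. \<forall>p\<in>{1..P}. \<forall>j\<in>{1..M-1}. \<forall>v. f (fk p \<xi>) (v, j) 0 \<in> \<Xi>)
       \<and> (\<forall>p\<in>{1..P+1}. \<forall>\<xi>\<in>\<Xi>f.
            V_f Pf (fk p \<xi>) - V_f Pf \<xi>
              \<le> - lam \<xi> (\<kappa> \<xi>) 1 - (\<Sum>i\<in>{1..<p}. lam (fk i \<xi>) (\<kappa> \<xi>) 0)))"
proof -
  define M where "M = Mtb g c"
  define K where "K = Y ** matrix_inv X"
  have M1: "M \<ge> 1" and MG: "int M * g \<ge> c" using Mtb_ge[OF tb(1,2)] by (simp_all add: M_def)
  have g0: "g \<ge> 0" using tb by simp
  have Kmv: "(Aj A k + Bj A B k ** K) *v x = Aj A k *v x + Bj A B k *v (K *v x)" for k x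
    by (simp add: matrix_vector_mult_add_rdistrib matrix_vector_mul_assoc)
  have fkf: "\<exists>\<beta>'. f_kf A B g c b K p (x, w, \<beta>) = (Aj A (p * M) *v x + Bj A B (p * M) *v (K *v x), K *v x, \<beta>')
     \<and> c - g \<le> \<beta>' \<and> \<beta>' \<le> b" if hp: "p \<ge> 1" "c - g \<le> \<beta>" "\<beta> \<le> b" for p x w \<beta>
  proof -
    obtain p' where "p = Suc p'" using hp(1) by (cases p) auto
    then show ?thesis using fk_form[OF tb, of A B K p' x w \<beta>] hp by (auto simp: M_def)
  qed
  have jg: "int j * g \<ge> g" if "j \<ge> 1" for j :: nat
    using mult_right_mono[of 1 "int j" g] that g0 by simp
  have P1: "\<forall>\<xi>\<in>Xi_f Xf UU g c b. kappa_f K M \<xi> \<in> Pi_set UU Dbar"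
    using Xf(4) M1 Dbar by (auto simp: Xi_f_def Pi_set_def kappa_f_def K_def M_def)
  have P2: "\<forall>p\<in>{1..P+1}. \<forall>\<xi>\<in>Xi_f Xf UU g c b. f_kf A B g c b K p \<xi> \<in> Xi_f Xf UU g c b"
  proof (intro ballI)
    fix p \<xi> assume p: "p \<in> {1..P+1}" and xi: "\<xi> \<in> Xi_f Xf UU g c b"
    obtain x w \<beta> where e: "\<xi> = (x, w, \<beta>)" by (cases \<xi>) auto
    have x: "x \<in> Xf" and bb: "c - g \<le> \<beta>" "\<beta> \<le> b" using xi e by (auto simp: Xi_f_def)
    obtain \<beta>' where f: "f_kf A B g c b K p (x, w, \<beta>) = (Aj A (p * M) *v x + Bj A B (p * M) *v (K *v x), K *v x, \<beta>')"
      and b': "c - g \<le> \<beta>'" "\<beta>' \<le> b" using fkf[of p \<beta> x w] p bb by auto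
    have "(\<lambda>x. (Aj A (p * M) + Bj A B (p * M) ** K) *v x) ` Xf \<subseteq> Xf"
      using Xf(5) p by (simp add: K_def M_def)
    then have "(Aj A (p * M) + Bj A B (p * M) ** K) *v x \<in> Xf" using x by blast
    then have "Aj A (p * M) *v x + Bj A B (p * M) *v (K *v x) \<in> Xf" by (simp only: Kmv)
    moreover have "K *v x \<in> UU" using Xf(4) x by (auto simp: K_def)
    ultimately show "f_kf A B g c b K p \<xi> \<in> Xi_f Xf UU g c b"
      using e f b' by (simp add: Xi_f_def)
  qed
  have P3: "\<forall>\<xi>\<in>Xi_f Xf UU g c b. \<forall>j\<in>{1..M-1}. trans_f A B g c b \<xi> (K *v fst \<xi>, j) 1 \<in> Xi_set XX UU b"
  proof (intro ballI)
    fix \<xi> j assume xi: "\<xi> \<in> Xi_f Xf UU g c b" and j: "j \<in> {1..M-1}"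
    obtain x w \<beta> where e: "\<xi> = (x, w, \<beta>)" by (cases \<xi>) auto
    have x: "x \<in> Xf" and bb: "c - g \<le> \<beta>" "\<beta> \<le> b" using xi e by (auto simp: Xi_f_def)
    have "(\<lambda>x. (Aj A (0 * Mtb g c + j) + Bj A B (0 * Mtb g c + j) ** (Y ** matrix_inv X)) *v x) ` Xf \<subseteq> XX"
      by (rule Xf(6)[rule_format]) (use j in \<open>auto simp: M_def\<close>)
    then have "(Aj A (0 * Mtb g c + j) + Bj A B (0 * Mtb g c + j) ** K) *v x \<in> XX" using x unfolding K_def by blast
    then have "Aj A j *v x + Bj A B j *v (K *v x) \<in> XX" by (simp only: Kmv mult_zero_left add_0)
    moreover have "K *v x \<in> UU" using Xf(4) x by (auto simp: K_def)
    moreover have jgj: "int j * g \<ge> g" using jg j by simp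
    moreover have "0 \<le> min (\<beta> + int j * g - c) b"
    proof -
      have "0 \<le> \<beta> + int j * g - c" using jgj bb by linarith
      then show ?thesis using bb tb by simp
    qed
    ultimately show "trans_f A B g c b \<xi> (K *v fst \<xi>, j) 1 \<in> Xi_set XX UU b"
      using e by (simp add: Xi_set_def trans_f_1')
  qed
  have P4: "\<forall>\<xi>\<in>Xi_f Xf UU g c b. \<forall>p\<in>{1..P}. \<forall>j\<in>{1..M-1}. \<forall>v.
      trans_f A B g c b (f_kf A B g c b K p \<xi>) (v, j) 0 \<in> Xi_set XX UU b"
  proof (intro ballI allI)
    fix \<xi> p j v assume xi: "\<xi> \<in> Xi_f Xf UU g c b" and j: "j \<in> {1..M-1}" and p: "p \<in> {1..P}"
    obtain x w \<beta> where e: "\<xi> = (x, w, \<beta>)" by (cases \<xi>) auto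
    have x: "x \<in> Xf" and bb: "c - g \<le> \<beta>" "\<beta> \<le> b" using xi e by (auto simp: Xi_f_def)
    obtain \<beta>' where f: "f_kf A B g c b K p (x, w, \<beta>) = (Aj A (p * M) *v x + Bj A B (p * M) *v (K *v x), K *v x, \<beta>')"
      and b': "c - g \<le> \<beta>'" "\<beta>' \<le> b" using fkf[of p \<beta> x w] p bb by auto
    have "(\<lambda>x. (Aj A (p * Mtb g c + j) + Bj A B (p * Mtb g c + j) ** (Y ** matrix_inv X)) *v x) ` Xf \<subseteq> XX"
      by (rule Xf(6)[rule_format]) (use j p in \<open>auto simp: M_def\<close>)
    then have "(\<lambda>x. (Aj A (p * M + j) + Bj A B (p * M + j) ** K) *v x) ` Xf \<subseteq> XX"
      unfolding K_def M_def .
    then have "(Aj A (p * M + j) + Bj A B (p * M + j) ** K) *v x \<in> XX" using x by blast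
    then have "Aj A (p * M + j) *v x + Bj A B (p * M + j) *v (K *v x) \<in> XX" by (simp only: Kmv)
    then have "Aj A j *v (Aj A (p * M) *v x + Bj A B (p * M) *v (K *v x)) + Bj A B j *v (K *v x) \<in> XX"
      by (simp only: compose_AB)
    moreover have "K *v x \<in> UU" using Xf(4) x by (auto simp: K_def)
    moreover have jgj: "int j * g \<ge> g" using jg j by simp
    moreover have "0 \<le> min (\<beta>' + int j * g - c) b"
    proof -
      have "0 \<le> \<beta>' + int j * g - c" using jgj b' by linarith
      then show ?thesis using b' tb by simp
    qed
    ultimately show "trans_f A B g c b (f_kf A B g c b K p \<xi>) (v, j) 0 \<in> Xi_set XX UU b"
      using e f by (simp add: Xi_set_def trans_f_0)
  qed
  have Xinv: "invertible X" using Xpd by (intro posdef_invertible) (auto simp: pos_def_def)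
  have Xs: "transpose X = X" using Xpd by (simp add: pos_def_def)
  have Qs: "transpose Q = Q" using Qpd by (simp add: pos_def_def)
  have Rs: "transpose R = R" using Rpd by (simp add: pos_def_def)
  have P5: "\<forall>p\<in>{1..P+1}. \<forall>\<xi>\<in>Xi_f Xf UU g c b.
      V_f (matrix_inv X) (f_kf A B g c b K p \<xi>) - V_f (matrix_inv X) \<xi>
        \<le> - interval_cost A B Q R g c b \<xi> (kappa_f K M \<xi>) 1
          - (\<Sum>i\<in>{1..<p}. interval_cost A B Q R g c b (f_kf A B g c b K i \<xi>) (kappa_f K M \<xi>) 0)"
  proof (intro ballI)
    fix p \<xi> assume p: "p \<in> {1..P+1}" and xi: "\<xi> \<in> Xi_f Xf UU g c b"
    obtain x w \<beta> where e: "\<xi> = (x, w, \<beta>)" by (cases \<xi>) auto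
    have bb: "c - g \<le> \<beta>" "\<beta> \<le> b" using xi e by (auto simp: Xi_f_def)
    define u where "u = K *v x"
    define i where "i = p * M"
    have i1: "i \<ge> 1" using p M1 by (simp add: i_def)
    define H where "H = block2 (Qi A Q i) (Si A B Q i) (transpose (Si A B Q i)) (Ri A B Q R i)"
    have Hinv: "invertible H" unfolding H_def
      by (rule posdef_invertible, rule H_pos[OF Qpd Rpd i1])
    have Hs: "transpose (matrix_inv H) = matrix_inv H"
      using inv_sym[OF Hinv] H_sym[OF Qs Rs] by (simp add: H_def)
    have lmi: "pos_semidef (block4 X 0 0 (Aj A i ** X + Bj A B i ** Y)
        0 (blk11 (matrix_inv H)) (blk12 (matrix_inv H)) X
        0 (transpose (blk12 (matrix_inv H))) (blk22 (matrix_inv H)) Y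
        (transpose (Aj A i ** X + Bj A B i ** Y)) X (transpose Y) X)"
      using LMI p by (simp add: i_def M_def H_def Qt_def St_def Rt_def QSR_inv_def)
    have k: "((Aj A i + Bj A B i ** K) *v x) \<bullet> (matrix_inv X *v ((Aj A i + Bj A B i ** K) *v x))
       - x \<bullet> (matrix_inv X *v x) \<le> - (join2 x u \<bullet> (H *v join2 x u))"
      using key[OF Xinv Xs Hinv Hs lmi, of x] by (simp add: K_def u_def)
    obtain \<beta>' where f: "f_kf A B g c b K p (x, w, \<beta>) = (Aj A i *v x + Bj A B i *v u, u, \<beta>')"
      using fkf[of p \<beta> x w] p bb by (auto simp: i_def u_def)
    have c1: "interval_cost A B Q R g c b \<xi> (kappa_f K M \<xi>) 1 = (\<Sum>j<M. qf A B Q R x u (0 * M + j))"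
      using ic1[OF M1] by (simp add: e kappa_f_def u_def)
    have c0: "interval_cost A B Q R g c b (f_kf A B g c b K l \<xi>) (kappa_f K M \<xi>) 0
       = (\<Sum>j<M. qf A B Q R x u (l * M + j))" if hl: "l \<in> {1..<p}" for l
    proof -
      obtain \<beta>'' where f': "f_kf A B g c b K l (x, w, \<beta>) = (Aj A (l*M) *v x + Bj A B (l*M) *v u, u, \<beta>'')"
        using fkf[of l \<beta> x w] hl bb by (auto simp: u_def)
      show ?thesis using ic0[OF M1] by (simp add: e f' kappa_f_def u_def)
    qed
    have "interval_cost A B Q R g c b \<xi> (kappa_f K M \<xi>) 1
          + (\<Sum>l\<in>{1..<p}. interval_cost A B Q R g c b (f_kf A B g c b K l \<xi>) (kappa_f K M \<xi>) 0)
        = (\<Sum>l<p. \<Sum>j<M. qf A B Q R x u (l * M + j))"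
      using p c1 by (simp add: c0 sum_split0[of p] del: One_nat_def)
    also have "\<dots> = join2 x u \<bullet> (H *v join2 x u)"
      unfolding group_sum H_def quadH[OF Qs] i_def ..
    finally have cc: "interval_cost A B Q R g c b \<xi> (kappa_f K M \<xi>) 1
          + (\<Sum>l\<in>{1..<p}. interval_cost A B Q R g c b (f_kf A B g c b K l \<xi>) (kappa_f K M \<xi>) 0)
        = join2 x u \<bullet> (H *v join2 x u)" .
    have "V_f (matrix_inv X) (f_kf A B g c b K p \<xi>) - V_f (matrix_inv X) \<xi>
       = ((Aj A i + Bj A B i ** K) *v x) \<bullet> (matrix_inv X *v ((Aj A i + Bj A B i ** K) *v x))
       - x \<bullet> (matrix_inv X *v x)"
      by (simp add: e f V_f_def Kmv u_def)
    then show "V_f (matrix_inv X) (f_kf A B g c b K p \<xi>) - V_f (matrix_inv X) \<xi>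
        \<le> - interval_cost A B Q R g c b \<xi> (kappa_f K M \<xi>) 1
          - (\<Sum>i\<in>{1..<p}. interval_cost A B Q R g c b (f_kf A B g c b K i \<xi>) (kappa_f K M \<xi>) 0)"
      using k cc by linarith
  qed
  show ?thesis unfolding Let_def K_def[symmetric] M_def[symmetric]
    using P1 P2 P3 P4 P5 by blast
qed

end
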